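(* Let $(\Omega,\mathcal{A},\mathbb{P})$ be a probability space and $k\colon\Omega\times\mathbb{R}\times\mathbb{R}\to\mathbb{R}$ jointly measurable, with $|k(\omega,s,t)|\le1$ almost surely and, almost surely, $k(\omega,s,t)$ being $L_k$-Lipschitz in $s$ uniformly in $t$; suppose $K(s,t)=\mathbb{E}_\omega[k(\omega,s,t)]$ is continuous and positive definite. Let $\rho$ be a Borel probability measure on $Z=\mathbb{R}^d\times\mathbb{R}\times\mathbb{R}$ supported on $S=\{(a,b,t)\in Z:\|a\|_2\le1,\ |b|\le1,\ |t|\le1\}$, and let $H_\rho=\{x\mapsto\int_S c(a,b,t)K(\langle a,x\rangle+b,t)\,d\rho(a,b,t):c\in L^2(\rho)\}$. Let $X\subset\mathbb{R}^d$ be compact. Then for any $f\in H_\rho$, $\eta>0$ and $\delta\in(0,1)$ there exist $c^*\in C(S)$, $\epsilon>0$ and $N\in\mathbb{N}$ such that, with $z_i=(a_i,b_i,t_i)$ i.i.d. with law $\rho$ and $\omega_i$ i.i.d. with law $\mathbb{P}$, independently, $i=1,\dots,N$, and $$F_N(x)=\frac1N\sum_{i=1}^N c^*(z_i)\,k(\omega_i,\langle a_i,x\rangle+b_i,t_i),$$ one has, with probability at least $1-\delta$ over the joint draw of $\{z_i,\omega_i\}_{i=1}^N$, $$\sup_{x\in X}|F_N(x)-f(x)|<\eta.$$ *)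

theory Defs
  imports "HOL-Probability.Probability"
begin

definition pos_def_kernel :: "(real \<Rightarrow> real \<Rightarrow> real) \<Rightarrow> bool" where
  "pos_def_kernel K \<longleftrightarrow> (\<forall>s t. K s t = K t s) \<and>
     (\<forall>(n::nat) (x::nat \<Rightarrow> real) (c::nat \<Rightarrow> real).
        (\<Sum>i<n. \<Sum>j<n. c i * c j * K (x i) (x j)) \<ge> 0)"

definition S_set :: "((real^'n) \<times> real \<times> real) set" where
  "S_set = {(a, b, t). norm a \<le> 1 \<and> \<bar>b\<bar> \<le> 1 \<and> \<bar>t\<bar> \<le> 1}"

definition H_rho :: "((real^'n) \<times> real \<times> real) measure \<Rightarrow> (real \<Rightarrow> real \<Rightarrow> real)
                      \<Rightarrow> (real^'n \<Rightarrow> real) set" where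
  "H_rho \<rho> K = {f. \<exists>c. c \<in> borel_measurable \<rho> \<and> integrable \<rho> (\<lambda>z. (c z)\<^sup>2) \<and>
      (\<forall>x. f x = (LINT z:S_set|\<rho>. c z * K (fst z \<bullet> x + fst (snd z)) (snd (snd z))))}"

end

theory Submission
  imports Defs
begin


definition capprox :: "('a::euclidean_space) measure \<Rightarrow> ('a \<Rightarrow> real) \<Rightarrow> bool" where
  "capprox \<rho> c \<longleftrightarrow> (\<forall>e>0. \<exists>g B. continuous_on UNIV g \<and> (\<forall>x. \<bar>g x\<bar> \<le> B) \<and>
      integrable \<rho> (\<lambda>x. c x - g x) \<and> (\<integral>x. \<bar>c x - g x\<bar> \<partial>\<rho>) < e)"

lemma capprox_indicator:
  fixes \<rho> :: "('a::euclidean_space) measure"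
  assumes "prob_space \<rho>" "sets \<rho> = sets borel" "A \<in> sets borel"
  shows "capprox \<rho> (indicator A)"
  unfolding capprox_def
proof (intro allI impI)
  fix e :: real assume e: "e > 0"
  interpret prob_space \<rho> by fact
  have sp: "space \<rho> = UNIV" using assms(2) sets_eq_imp_space_eq by fastforce
  have fin: "emeasure \<rho> (space \<rho>) \<noteq> \<infinity>" by simp
  have Ameas: "A \<in> sets \<rho>" using assms by simp
  obtain C where C: "C \<subseteq> A" "compact C" "measure \<rho> A < measure \<rho> C + e/2"
  proof (cases "measure \<rho> A < e/2")
    case True then show ?thesis using that[of "{}"] by auto
  next
    case False
    have "ennreal (measure \<rho> A - e/2) < emeasure \<rho> A"
      using False e by (simp add: emeasure_eq_measure ennreal_lessI)
    also have "\<dots> = (SUP K \<in> {K. K \<subseteq> A \<and> compact K}. emeasure \<rho> K)"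
      by (rule inner_regular[OF assms(2) fin assms(3)])
    finally obtain K where K: "K \<subseteq> A" "compact K" "ennreal (measure \<rho> A - e/2) < emeasure \<rho> K"
      by (auto simp: less_SUP_iff)
    then have "measure \<rho> A - e/2 < measure \<rho> K"
      using False e by (simp add: emeasure_eq_measure ennreal_less_iff)
    then show ?thesis using that[of K] K by auto
  qed
  obtain U where U: "A \<subseteq> U" "open U" "measure \<rho> U < measure \<rho> A + e/2"
  proof -
    have "(INF U \<in> {U. A \<subseteq> U \<and> open U}. emeasure \<rho> U) = emeasure \<rho> A"
      by (rule outer_regular[OF assms(2) fin assms(3), symmetric])
    also have "\<dots> < ennreal (measure \<rho> A + e/2)"
      using e by (simp add: emeasure_eq_measure ennreal_lessI)
    finally obtain U where "A \<subseteq> U" "open U" "emeasure \<rho> U < ennreal (measure \<rho> A + e/2)"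
      by (auto simp: INF_less_iff)
    moreover have "0 \<le> measure \<rho> U" by simp
    ultimately have "measure \<rho> U < measure \<rho> A + e/2"
      by (metis emeasure_eq_measure ennreal_less_iff)
    then show ?thesis using that[of U] \<open>A \<subseteq> U\<close> \<open>open U\<close> by blast
  qed
  have "closed C" using C compact_imp_closed by blast
  moreover have "closed (- U)" using U by auto
  moreover have "C \<inter> - U = {}" using C U by auto
  ultimately obtain g :: "'a \<Rightarrow> real" where g: "continuous_on UNIV g" "\<And>x. g x \<in> closed_segment 1 0"
    "\<And>x. x \<in> C \<Longrightarrow> g x = 1" "\<And>x. x \<in> -U \<Longrightarrow> g x = 0"
    by (rule Urysohn[of C "- U" 1 0]) auto
  have g01: "0 \<le> g x \<and> g x \<le> 1" for x using g(2)[of x] by (auto simp: closed_segment_eq_real_ivl)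
  have gm: "g \<in> borel_measurable \<rho>"
    by (subst measurable_cong_sets[OF assms(2) refl]) (rule borel_measurable_continuous_onI[OF g(1)])
  have Um: "U \<in> sets \<rho>" "C \<in> sets \<rho>" using U C assms(2) by (simp_all add: compact_imp_closed borel_open borel_closed)
  have bd: "\<bar>indicator A x - g x\<bar> \<le> indicator (U - C) x" for x
    using g01[of x] g(3)[of x] g(4)[of x] C U by (auto simp: indicator_def)
  have int: "integrable \<rho> (\<lambda>x. indicator A x - g x)"
  proof (rule integrable_const_bound[where B=1])
    show "AE x in \<rho>. norm (indicator A x - g x) \<le> 1"
      using g01 by (intro AE_I2) (auto simp: indicator_def)
  qed (use gm Ameas in auto)
  have "(\<integral>x. \<bar>indicator A x - g x\<bar> \<partial>\<rho>) \<le> (\<integral>x. indicator (U - C) x \<partial>\<rho>)"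
  proof (rule integral_mono[OF integrable_abs[OF int]])
    show "integrable \<rho> (indicator (U - C) :: 'a \<Rightarrow> real)"
      using Um by (intro integrable_real_indicator) (auto simp: emeasure_eq_measure)
  qed (rule bd)
  also have "\<dots> = measure \<rho> (U - C)" using Um by simp
  also have "\<dots> = measure \<rho> U - measure \<rho> C" using Um C U by (subst finite_measure_Diff) auto
  also have "\<dots> < e" using C U by linarith
  finally show "\<exists>g B. continuous_on UNIV g \<and> (\<forall>x. \<bar>g x\<bar> \<le> B) \<and>
      integrable \<rho> (\<lambda>x. indicator A x - g x) \<and> (\<integral>x. \<bar>indicator A x - g x\<bar> \<partial>\<rho>) < e"
    using g(1) int g01 abs_of_nonneg[of "g _"] by (intro exI[of _ g] exI[of _ 1]) (simp add: abs_le_iff)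
qed

lemma capprox_add:
  assumes "capprox \<rho> c1" "capprox \<rho> c2"
  shows "capprox \<rho> (\<lambda>x. c1 x + c2 x)"
  unfolding capprox_def
proof (intro allI impI)
  fix e :: real assume e: "e > 0"
  obtain g1 B1 where g1: "continuous_on UNIV g1" "\<forall>x. \<bar>g1 x\<bar> \<le> B1"
      "integrable \<rho> (\<lambda>x. c1 x - g1 x)" "(\<integral>x. \<bar>c1 x - g1 x\<bar> \<partial>\<rho>) < e/2"
    using assms(1) e unfolding capprox_def by (meson half_gt_zero)
  obtain g2 B2 where g2: "continuous_on UNIV g2" "\<forall>x. \<bar>g2 x\<bar> \<le> B2"
      "integrable \<rho> (\<lambda>x. c2 x - g2 x)" "(\<integral>x. \<bar>c2 x - g2 x\<bar> \<partial>\<rho>) < e/2"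
    using assms(2) e unfolding capprox_def by (meson half_gt_zero)
  have int: "integrable \<rho> (\<lambda>x. (c1 x + c2 x) - (g1 x + g2 x))"
    using Bochner_Integration.integrable_add[OF g1(3) g2(3)] by (simp add: algebra_simps)
  have "(\<integral>x. \<bar>(c1 x + c2 x) - (g1 x + g2 x)\<bar> \<partial>\<rho>) \<le> (\<integral>x. \<bar>c1 x - g1 x\<bar> + \<bar>c2 x - g2 x\<bar> \<partial>\<rho>)"
    by (rule integral_mono[OF integrable_abs[OF int] Bochner_Integration.integrable_add[OF integrable_abs[OF g1(3)] integrable_abs[OF g2(3)]]]) auto
  also have "\<dots> = (\<integral>x. \<bar>c1 x - g1 x\<bar> \<partial>\<rho>) + (\<integral>x. \<bar>c2 x - g2 x\<bar> \<partial>\<rho>)"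
    by (rule Bochner_Integration.integral_add[OF integrable_abs[OF g1(3)] integrable_abs[OF g2(3)]])
  also have "\<dots> < e" using g1(4) g2(4) by linarith
  finally have "(\<integral>x. \<bar>(c1 x + c2 x) - (g1 x + g2 x)\<bar> \<partial>\<rho>) < e" .
  moreover have "continuous_on UNIV (\<lambda>x. g1 x + g2 x)" using g1(1) g2(1) by (intro continuous_intros)
  moreover have "\<forall>x. \<bar>g1 x + g2 x\<bar> \<le> B1 + B2" using g1(2) g2(2) abs_triangle_ineq add_mono order_trans by metis
  ultimately show "\<exists>g B. continuous_on UNIV g \<and> (\<forall>x. \<bar>g x\<bar> \<le> B) \<and>
      integrable \<rho> (\<lambda>x. (c1 x + c2 x) - g x) \<and> (\<integral>x. \<bar>(c1 x + c2 x) - g x\<bar> \<partial>\<rho>) < e"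
    using int by blast
qed

lemma capprox_mult:
  assumes "capprox \<rho> c"
  shows "capprox \<rho> (\<lambda>x. a * c x)"
  unfolding capprox_def
proof (intro allI impI)
  fix e :: real assume e: "e > 0"
  show "\<exists>g B. continuous_on UNIV g \<and> (\<forall>x. \<bar>g x\<bar> \<le> B) \<and>
      integrable \<rho> (\<lambda>x. a * c x - g x) \<and> (\<integral>x. \<bar>a * c x - g x\<bar> \<partial>\<rho>) < e"
  proof (cases "a = 0")
    case True
    then show ?thesis using e by (intro exI[of _ "\<lambda>_. 0"] exI[of _ 0]) auto
  next
    case False
    then have a: "\<bar>a\<bar> > 0" by simp
    obtain g B where g: "continuous_on UNIV g" "\<forall>x. \<bar>g x\<bar> \<le> B"
      "integrable \<rho> (\<lambda>x. c x - g x)" "(\<integral>x. \<bar>c x - g x\<bar> \<partial>\<rho>) < e / \<bar>a\<bar>"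
      using assms e a unfolding capprox_def by (meson divide_pos_pos)
    have int: "integrable \<rho> (\<lambda>x. a * c x - a * g x)"
      using integrable_mult_right[OF g(3), of a] by (simp add: algebra_simps)
    have "(\<integral>x. \<bar>a * c x - a * g x\<bar> \<partial>\<rho>) = (\<integral>x. \<bar>a\<bar> * \<bar>c x - g x\<bar> \<partial>\<rho>)"
      by (simp add: abs_mult flip: right_diff_distrib)
    also have "\<dots> = \<bar>a\<bar> * (\<integral>x. \<bar>c x - g x\<bar> \<partial>\<rho>)" by simp
    also have "\<dots> < \<bar>a\<bar> * (e / \<bar>a\<bar>)" using g(4) a by (intro mult_strict_left_mono) auto
    also have "\<dots> = e" using a by simp
    finally have "(\<integral>x. \<bar>a * c x - a * g x\<bar> \<partial>\<rho>) < e" .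
    moreover have "continuous_on UNIV (\<lambda>x. a * g x)" using g(1) by (intro continuous_intros)
    moreover have "\<forall>x. \<bar>a * g x\<bar> \<le> \<bar>a\<bar> * B" using g(2) a by (simp add: abs_mult)
    ultimately show ?thesis using int by blast
  qed
qed

lemma capprox_zero: "capprox \<rho> (\<lambda>x. 0)"
  unfolding capprox_def by (intro allI impI exI[of _ "\<lambda>_. 0"] exI[of _ 0]) auto

lemma capprox_sum:
  assumes "finite F" "\<And>y. y \<in> F \<Longrightarrow> capprox \<rho> (c y)"
  shows "capprox \<rho> (\<lambda>x. \<Sum>y\<in>F. c y x)"
  using assms
proof (induction F rule: finite_induct)
  case empty then show ?case by (simp add: capprox_zero)
next
  case (insert y F)
  then show ?case by (simp add: capprox_add)
qed

lemma capprox_cong: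
  assumes "capprox \<rho> c" "\<And>x. c x = d x"
  shows "capprox \<rho> d"
proof -
  have "c = d" using assms(2) by auto
  then show ?thesis using assms(1) by simp
qed

lemma capprox_simple:
  fixes \<rho> :: "('a::euclidean_space) measure"
  assumes "prob_space \<rho>" "sets \<rho> = sets borel" "simple_function \<rho> s"
  shows "capprox \<rho> (s :: 'a \<Rightarrow> real)"
proof -
  have sp: "space \<rho> = UNIV" using assms(2) sets_eq_imp_space_eq by fastforce
  have fin: "finite (s ` UNIV)" using assms(3) sp by (simp add: simple_function_def)
  have meas: "s -` {y} \<in> sets borel" for y
    using simple_functionD(2)[OF assms(3), of "{y}"] sp assms(2) by simp
  have rep: "(\<Sum>y\<in>s ` UNIV. y * indicator (s -` {y}) x) = s x" for x
  proof -
    have "(\<Sum>y\<in>s ` UNIV. y * indicator (s -` {y}) x) = (\<Sum>y\<in>s ` UNIV. if y = s x then y else 0)"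
      by (intro sum.cong) (auto simp: indicator_def)
    also have "\<dots> = s x" using fin by simp
    finally show ?thesis .
  qed
  have "capprox \<rho> (\<lambda>x. \<Sum>y\<in>s ` UNIV. y * indicator (s -` {y}) x)"
    using fin by (intro capprox_sum capprox_mult capprox_indicator assms(1,2) meas)
  then show ?thesis using rep by (rule capprox_cong)
qed

lemma capprox_integrable:
  fixes \<rho> :: "('a::euclidean_space) measure"
  assumes "prob_space \<rho>" "sets \<rho> = sets borel" "integrable \<rho> c"
  shows "capprox \<rho> (c :: 'a \<Rightarrow> real)"
  unfolding capprox_def
proof (intro allI impI)
  fix e :: real assume e: "e > 0"
  obtain r where "has_bochner_integral \<rho> c r" using assms(3) by (auto simp: integrable.simps)
  then have "\<exists>s. (\<forall>i. Bochner_Integration.simple_bochner_integrable \<rho> (s i)) \<and>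
    (\<lambda>i. \<integral>\<^sup>+x. norm (c x - s i x) \<partial>\<rho>) \<longlonglongrightarrow> 0"
    by (cases rule: has_bochner_integral.cases) blast
  then obtain s where s: "\<And>i. Bochner_Integration.simple_bochner_integrable \<rho> (s i)"
    "(\<lambda>i. \<integral>\<^sup>+x. norm (c x - s i x) \<partial>\<rho>) \<longlonglongrightarrow> 0"
    by blast
  have "ennreal (e/2) > 0" using e by simp
  from order_tendstoD(2)[OF s(2) this] obtain i where
    i: "(\<integral>\<^sup>+x. norm (c x - s i x) \<partial>\<rho>) < ennreal (e/2)"
    by (auto simp: eventually_sequentially)
  have si: "integrable \<rho> (s i)"
    using s(1) by (rule integrableI_simple_bochner_integrable)
  have sf: "simple_function \<rho> (s i)" using s(1) by (simp add: Bochner_Integration.simple_bochner_integrable.simps)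
  have intd: "integrable \<rho> (\<lambda>x. c x - s i x)" using assms(3) si by auto
  have "ennreal (\<integral>x. \<bar>c x - s i x\<bar> \<partial>\<rho>) = (\<integral>\<^sup>+x. norm (c x - s i x) \<partial>\<rho>)"
    using intd by (subst nn_integral_eq_integral) auto
  with i have d1: "(\<integral>x. \<bar>c x - s i x\<bar> \<partial>\<rho>) < e/2"
    by (metis ennreal_less_iff integral_nonneg_AE AE_I2 abs_ge_zero)
  obtain g B where g: "continuous_on UNIV g" "\<forall>x. \<bar>g x\<bar> \<le> B"
      "integrable \<rho> (\<lambda>x. s i x - g x)" "(\<integral>x. \<bar>s i x - g x\<bar> \<partial>\<rho>) < e/2"
    using capprox_simple[OF assms(1,2) sf] e unfolding capprox_def by (meson half_gt_zero)
  have int: "integrable \<rho> (\<lambda>x. c x - g x)"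
    using Bochner_Integration.integrable_add[OF intd g(3)] by simp
  have "(\<integral>x. \<bar>c x - g x\<bar> \<partial>\<rho>) \<le> (\<integral>x. \<bar>c x - s i x\<bar> + \<bar>s i x - g x\<bar> \<partial>\<rho>)"
    by (rule integral_mono[OF integrable_abs[OF int] Bochner_Integration.integrable_add[OF integrable_abs[OF intd] integrable_abs[OF g(3)]]]) auto
  also have "\<dots> = (\<integral>x. \<bar>c x - s i x\<bar> \<partial>\<rho>) + (\<integral>x. \<bar>s i x - g x\<bar> \<partial>\<rho>)"
    by (rule Bochner_Integration.integral_add[OF integrable_abs[OF intd] integrable_abs[OF g(3)]])
  also have "\<dots> < e" using d1 g(4) by linarith
  finally show "\<exists>g B. continuous_on UNIV g \<and> (\<forall>x. \<bar>g x\<bar> \<le> B) \<and>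
      integrable \<rho> (\<lambda>x. c x - g x) \<and> (\<integral>x. \<bar>c x - g x\<bar> \<partial>\<rho>) < e"
    using g(1,2) int by blast
qed



lemma pair_moment:
  fixes Q :: "'q measure" and D :: "'q \<Rightarrow> real" and N i l :: nat
  assumes Q: "prob_space Q" and Dm: "D \<in> borel_measurable Q" and Db: "\<And>q. q \<in> space Q \<Longrightarrow> \<bar>D q\<bar> \<le> C"
    and D0: "(\<integral>q. D q \<partial>Q) = 0" and il: "i < N" "l < N"
  shows "(\<integral>p. D (p i) * D (p l) \<partial>PiM {..<N} (\<lambda>_. Q)) = (if i = l then (\<integral>q. (D q)\<^sup>2 \<partial>Q) else 0)"
proof -
  interpret Q: prob_space Q by fact
  interpret product_sigma_finite "\<lambda>_. Q" by unfold_locales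
  define f where "f m q = (if m = i then D q else 1) * (if m = l then D q else 1)" for m q
  have intD: "integrable Q D" using Dm Db by (intro Q.integrable_const_bound[where B=C]) auto
  have intD2: "integrable Q (\<lambda>q. D q * D q)"
  proof (rule Q.integrable_const_bound[where B="C * C"])
    show "AE x in Q. norm (D x * D x) \<le> C * C"
    proof (intro AE_I2)
      fix x assume "x \<in> space Q"
      then have "\<bar>D x\<bar> \<le> C" by (rule Db)
      then show "norm (D x * D x) \<le> C * C"
        using mult_mono[OF \<open>\<bar>D x\<bar> \<le> C\<close> \<open>\<bar>D x\<bar> \<le> C\<close>] by (simp add: abs_mult)
    qed
  qed (use Dm in simp)
  have intf: "integrable Q (f m)" for m
    unfolding f_def by (cases "m = i"; cases "m = l") (simp_all add: intD intD2)
  have "(\<integral>p. D (p i) * D (p l) \<partial>PiM {..<N} (\<lambda>_. Q)) = (\<integral>p. (\<Prod>m\<in>{..<N}. f m (p m)) \<partial>PiM {..<N} (\<lambda>_. Q))"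
  proof (rule Bochner_Integration.integral_cong[OF refl])
    fix p assume "p \<in> space (PiM {..<N} (\<lambda>_. Q))"
    have "(\<Prod>m\<in>{..<N}. f m (p m)) = (\<Prod>m\<in>{..<N}. if m = i then D (p m) else 1) * (\<Prod>m\<in>{..<N}. if m = l then D (p m) else 1)"
      unfolding f_def by (rule prod.distrib)
    also have "\<dots> = D (p i) * D (p l)" using il by simp
    finally show "D (p i) * D (p l) = (\<Prod>m\<in>{..<N}. f m (p m))" by simp
  qed
  also have "\<dots> = (\<Prod>m\<in>{..<N}. integral\<^sup>L Q (f m))"
    by (rule product_integral_prod) (auto intro: intf)
  also have "\<dots> = (if i = l then (\<integral>q. (D q)\<^sup>2 \<partial>Q) else 0)"
  proof (cases "i = l")
    case True
    have "(\<Prod>m\<in>{..<N}. integral\<^sup>L Q (f m)) = (\<Prod>m\<in>{..<N}. if m = i then (\<integral>q. (D q)\<^sup>2 \<partial>Q) else 1)"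
      using True by (intro prod.cong refl) (auto simp: f_def[abs_def] power2_eq_square Q.prob_space)
    then show ?thesis using True il by simp
  next
    case False
    have "integral\<^sup>L Q (f i) = 0" using False D0 by (simp add: f_def[abs_def])
    then have "(\<Prod>m\<in>{..<N}. integral\<^sup>L Q (f m)) = 0" using il by (intro prod_zero) auto
    then show ?thesis using False by simp
  qed
  finally show ?thesis .
qed

lemma mc_var:
  fixes Q :: "'q measure" and \<phi> :: "'q \<Rightarrow> real" and N :: nat
  assumes Q: "prob_space Q" and \<phi>m: "\<phi> \<in> borel_measurable Q" and \<phi>b: "\<And>q. q \<in> space Q \<Longrightarrow> \<bar>\<phi> q\<bar> \<le> B"
    and N: "N > 0"
  shows "integrable (PiM {..<N} (\<lambda>_. Q)) (\<lambda>p. ((1/N) * (\<Sum>i<N. \<phi> (p i)) - (\<integral>q. \<phi> q \<partial>Q))\<^sup>2)"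
    and "(\<integral>p. ((1/N) * (\<Sum>i<N. \<phi> (p i)) - (\<integral>q. \<phi> q \<partial>Q))\<^sup>2 \<partial>PiM {..<N} (\<lambda>_. Q)) \<le> 4 * B\<^sup>2 / N"
proof -
  interpret Q: prob_space Q by fact
  define P where "P = PiM {..<N} (\<lambda>_. Q)"
  interpret P: prob_space P unfolding P_def by (rule prob_space_PiM) (rule Q)
  define \<mu> where "\<mu> = (\<integral>q. \<phi> q \<partial>Q)"
  define D where "D q = \<phi> q - \<mu>" for q
  have intphi: "integrable Q \<phi>" using \<phi>m \<phi>b by (intro Q.integrable_const_bound[where B=B]) auto
  have B0: "0 \<le> B"
  proof -
    from Q.not_empty obtain q where "q \<in> space Q" by blast
    from \<phi>b[OF this] show ?thesis by linarith
  qed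
  have mub: "\<bar>\<mu>\<bar> \<le> B"
  proof -
    have "\<bar>\<mu>\<bar> \<le> (\<integral>q. \<bar>\<phi> q\<bar> \<partial>Q)" unfolding \<mu>_def by (rule integral_abs_bound)
    also have "\<dots> \<le> (\<integral>q. B \<partial>Q)" using intphi \<phi>b by (intro integral_mono) auto
    finally show ?thesis by (simp add: Q.prob_space)
  qed
  have Dm[measurable]: "D \<in> borel_measurable Q" unfolding D_def using \<phi>m by measurable
  have Db: "\<bar>D q\<bar> \<le> 2 * B" if "q \<in> space Q" for q
    using \<phi>b[OF that] mub unfolding D_def by linarith
  have D0: "(\<integral>q. D q \<partial>Q) = 0" unfolding D_def \<mu>_def using intphi by (simp add: Q.prob_space)
  have sq: "(D q)\<^sup>2 \<le> (2*B)\<^sup>2" if "q \<in> space Q" for q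
  proof -
    have "\<bar>D q\<bar> \<le> \<bar>2*B\<bar>" using Db[OF that] B0 by simp
    then show ?thesis by (simp only: abs_le_square_iff)
  qed
  have intD2: "integrable Q (\<lambda>q. (D q)\<^sup>2)"
  proof (rule Q.integrable_const_bound[where B="(2*B)\<^sup>2"])
    show "AE x in Q. norm ((D x)\<^sup>2) \<le> (2 * B)\<^sup>2" using sq by (intro AE_I2) simp
  qed (use Dm in simp)
  have D2b: "(\<integral>q. (D q)\<^sup>2 \<partial>Q) \<le> 4 * B\<^sup>2"
  proof -
    have "(\<integral>q. (D q)\<^sup>2 \<partial>Q) \<le> (\<integral>q. (2*B)\<^sup>2 \<partial>Q)"
      using intD2 sq by (intro integral_mono) auto
    then show ?thesis by (simp add: Q.prob_space power_mult_distrib)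
  qed
  have comp[measurable]: "(\<lambda>p. p i) \<in> measurable P Q" if "i < N" for i
    unfolding P_def using that by (intro measurable_component_singleton) auto
  have intpair: "integrable P (\<lambda>p. D (p i) * D (p l))" if "i < N" "l < N" for i l
  proof (rule P.integrable_const_bound[where B="(2*B)*(2*B)"])
    show "AE x in P. norm (D (x i) * D (x l)) \<le> 2 * B * (2 * B)"
    proof (intro AE_I2)
      fix x assume x: "x \<in> space P"
      have a: "\<bar>D (x i)\<bar> \<le> 2 * B" by (rule Db, rule measurable_space[OF comp[OF that(1)] x])
      have b: "\<bar>D (x l)\<bar> \<le> 2 * B" by (rule Db, rule measurable_space[OF comp[OF that(2)] x])
      show "norm (D (x i) * D (x l)) \<le> 2 * B * (2 * B)"
        using mult_mono[OF a b] B0 by (simp add: abs_mult)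
    qed
    show "(\<lambda>x. D (x i) * D (x l)) \<in> borel_measurable P"
      using that by measurable
  qed
  have eq: "((1/N) * (\<Sum>i<N. \<phi> (p i)) - \<mu>)\<^sup>2 = (1/N)\<^sup>2 * (\<Sum>i<N. \<Sum>l<N. D (p i) * D (p l))" for p
  proof -
    have "(1/N) * (\<Sum>i<N. \<phi> (p i)) - \<mu> = (1/N) * (\<Sum>i<N. D (p i))"
      using N by (simp add: D_def sum_subtractf field_simps card_lessThan)
    then show ?thesis by (simp add: power_mult_distrib power2_eq_square sum_product)
  qed
  have int: "integrable P (\<lambda>p. (1/N)\<^sup>2 * (\<Sum>i<N. \<Sum>l<N. D (p i) * D (p l)))"
    using intpair by (intro integrable_mult_right Bochner_Integration.integrable_sum) auto
  then show "integrable (PiM {..<N} (\<lambda>_. Q)) (\<lambda>p. ((1/N) * (\<Sum>i<N. \<phi> (p i)) - (\<integral>q. \<phi> q \<partial>Q))\<^sup>2)"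
    unfolding P_def[symmetric] \<mu>_def[symmetric] eq .
  have "(\<integral>p. ((1/N) * (\<Sum>i<N. \<phi> (p i)) - \<mu>)\<^sup>2 \<partial>P) = (1/N)\<^sup>2 * (\<Sum>i<N. \<Sum>l<N. (\<integral>p. D (p i) * D (p l) \<partial>P))"
  proof -
    have "(\<integral>p. (\<Sum>i<N. \<Sum>l<N. D (p i) * D (p l)) \<partial>P) = (\<Sum>i<N. \<integral>p. (\<Sum>l<N. D (p i) * D (p l)) \<partial>P)"
      by (rule Bochner_Integration.integral_sum) (auto intro!: Bochner_Integration.integrable_sum intpair)
    also have "\<dots> = (\<Sum>i<N. \<Sum>l<N. (\<integral>p. D (p i) * D (p l) \<partial>P))"
      by (intro sum.cong refl Bochner_Integration.integral_sum) (auto intro: intpair)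
    finally show ?thesis unfolding eq by simp
  qed
  also have "\<dots> = (1/N)\<^sup>2 * (\<Sum>i<N. \<Sum>l<N. if i = l then (\<integral>q. (D q)\<^sup>2 \<partial>Q) else 0)"
    unfolding P_def using pair_moment[OF Q Dm Db D0] by (intro arg_cong2[where f="(*)"] sum.cong refl) auto
  also have "\<dots> = (1/N)\<^sup>2 * (N * (\<integral>q. (D q)\<^sup>2 \<partial>Q))"
    by simp
  also have "\<dots> \<le> (1/N)\<^sup>2 * (N * (4 * B\<^sup>2))"
    using D2b by (intro mult_left_mono) auto
  also have "\<dots> = 4 * B\<^sup>2 / N" using N by (simp add: power2_eq_square field_simps)
  finally show "(\<integral>p. ((1/N) * (\<Sum>i<N. \<phi> (p i)) - (\<integral>q. \<phi> q \<partial>Q))\<^sup>2 \<partial>PiM {..<N} (\<lambda>_. Q)) \<le> 4 * B\<^sup>2 / N"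
    unfolding P_def \<mu>_def .
qed



lemma S_set_borel: "(S_set :: ((real^'n) \<times> real \<times> real) set) \<in> sets borel"
proof -
  have "(S_set :: ((real^'n) \<times> real \<times> real) set) =
     {z. norm (fst z) \<le> 1 \<and> \<bar>fst (snd z)\<bar> \<le> 1 \<and> \<bar>snd (snd z)\<bar> \<le> 1}"
    by (auto simp: S_set_def)
  moreover have "closed {z :: (real^'n) \<times> real \<times> real. norm (fst z) \<le> 1 \<and> \<bar>fst (snd z)\<bar> \<le> 1 \<and> \<bar>snd (snd z)\<bar> \<le> 1}"
    by (intro closed_Collect_conj closed_Collect_le continuous_intros)
  ultimately show ?thesis by (simp add: borel_closed)
qed

theorem corollary13:
  fixes M :: "'w measure"
    and k :: "'w \<Rightarrow> real \<Rightarrow> real \<Rightarrow> real"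
    and L :: real
    and K :: "real \<Rightarrow> real \<Rightarrow> real"
    and \<rho> :: "((real^'n) \<times> real \<times> real) measure"
    and X :: "(real^'n) set"
    and f :: "real^'n \<Rightarrow> real"
    and \<eta> \<delta> :: real
  assumes "prob_space M"
    and "(\<lambda>(\<omega>, s, t). k \<omega> s t) \<in> borel_measurable (M \<Otimes>\<^sub>M (borel \<Otimes>\<^sub>M borel))"
    and "AE \<omega> in M. \<forall>s t. \<bar>k \<omega> s t\<bar> \<le> 1"
    and "AE \<omega> in M. \<forall>s s' t. \<bar>k \<omega> s t - k \<omega> s' t\<bar> \<le> L * \<bar>s - s'\<bar>"
    and "\<And>s t. K s t = (\<integral>\<omega>. k \<omega> s t \<partial>M)"
    and "continuous_on UNIV (\<lambda>(s, t). K s t)"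
    and "pos_def_kernel K"
    and "prob_space \<rho>"
    and "sets \<rho> = sets borel"
    and "measure \<rho> S_set = 1"
    and "compact X"
    and "f \<in> H_rho \<rho> K"
    and "\<eta> > 0"
    and "0 < \<delta>" and "\<delta> < 1"
  shows "\<exists>cstar :: (real^'n) \<times> real \<times> real \<Rightarrow> real. \<exists>\<epsilon>::real. \<exists>N::nat.
           continuous_on S_set cstar \<and> \<epsilon> > 0 \<and> N > 0 \<and>
           (\<exists>A \<in> sets (PiM {..<N} (\<lambda>_. \<rho> \<Otimes>\<^sub>M M)).
              measure (PiM {..<N} (\<lambda>_. \<rho> \<Otimes>\<^sub>M M)) A \<ge> 1 - \<delta> \<and>
              (\<forall>p \<in> A. \<exists>\<eta>' < \<eta>. \<forall>x \<in> X.
                 \<bar>(1 / real N) * (\<Sum>i<N. cstar (fst (p i)) *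
                      k (snd (p i)) (fst (fst (p i)) \<bullet> x + fst (snd (fst (p i))))
                                    (snd (snd (fst (p i)))))
                  - f x\<bar> \<le> \<eta>'))"
proof -
  note kmeas[measurable] = assms(2)
  interpret M: prob_space M by fact
  interpret R: prob_space \<rho> by fact
  have sp: "space \<rho> = UNIV" using assms(9) sets_eq_imp_space_eq by fastforce
  have Sb: "S_set \<in> sets \<rho>" using assms(9) S_set_borel by simp
  obtain c where cm: "c \<in> borel_measurable \<rho>" and c2: "integrable \<rho> (\<lambda>z. (c z)\<^sup>2)"
    and fdef: "\<And>x. f x = (LINT z:S_set|\<rho>. c z * K (fst z \<bullet> x + fst (snd z)) (snd (snd z)))"
    using assms(12) unfolding H_rho_def by blast
  have cint: "integrable \<rho> c" using cm c2 by (rule R.square_integrable_imp_integrable)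
  have "capprox \<rho> c" by (rule capprox_integrable[OF assms(8,9) cint])
  then obtain g B where g: "continuous_on UNIV g" "\<forall>z. \<bar>g z\<bar> \<le> B"
      "integrable \<rho> (\<lambda>z. c z - g z)" "(\<integral>z. \<bar>c z - g z\<bar> \<partial>\<rho>) < \<eta>/4"
    unfolding capprox_def using assms(13) by (meson divide_pos_pos zero_less_numeral)
  define e0 where "e0 = (\<integral>z. \<bar>c z - g z\<bar> \<partial>\<rho>)"
  have B0: "0 \<le> B" using g(2) by (meson abs_ge_zero order_trans)
  have gm[measurable]: "g \<in> borel_measurable borel" using g(1) by (rule borel_measurable_continuous_onI)
  have "AE \<omega> in M. (\<forall>s t. \<bar>k \<omega> s t\<bar> \<le> 1) \<and> (\<forall>s s' t. \<bar>k \<omega> s t - k \<omega> s' t\<bar> \<le> L * \<bar>s - s'\<bar>)"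
    using assms(3,4) by eventually_elim auto
  then obtain N0 where N0: "{\<omega>\<in>space M. \<not> ((\<forall>s t. \<bar>k \<omega> s t\<bar> \<le> 1) \<and> (\<forall>s s' t. \<bar>k \<omega> s t - k \<omega> s' t\<bar> \<le> L * \<bar>s - s'\<bar>))} \<subseteq> N0"
     "emeasure M N0 = 0" "N0 \<in> sets M"
    by (rule AE_E)
  have N0m[measurable]: "N0 \<in> sets M" by fact
  have good: "\<bar>k \<omega> s t\<bar> \<le> 1" "\<bar>k \<omega> s t - k \<omega> s' t\<bar> \<le> L * \<bar>s - s'\<bar>"
    if "\<omega> \<in> space M" "\<omega> \<notin> N0" for \<omega> s s' t
    using N0(1) that by blast+
  have L0: "0 \<le> L"
  proof -
    have "space M \<noteq> N0"
      using N0(2) M.emeasure_space_1 by auto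
    then obtain \<omega> where "\<omega> \<in> space M" "\<omega> \<notin> N0" using N0(3) sets.sets_into_space by blast
    from good(2)[OF this, of 1 0 0] have "\<bar>k \<omega> 1 0 - k \<omega> 0 0\<bar> \<le> L" by simp
    then show ?thesis by (meson abs_ge_zero order_trans)
  qed
  define kk where "kk \<omega> s t = (if \<omega> \<in> space M \<and> \<omega> \<notin> N0 then k \<omega> s t else 0)" for \<omega> s t
  have kkb: "\<bar>kk \<omega> s t\<bar> \<le> 1" for \<omega> s t using good(1) by (simp add: kk_def)
  have kkL: "\<bar>kk \<omega> s t - kk \<omega> s' t\<bar> \<le> L * \<bar>s - s'\<bar>" for \<omega> s s' t
    using good(2) L0 by (simp add: kk_def)
  have kkm[measurable]: "(\<lambda>(\<omega>, s, t). kk \<omega> s t) \<in> borel_measurable (M \<Otimes>\<^sub>M (borel \<Otimes>\<^sub>M borel))"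
  proof -
    have "(\<lambda>x. if fst x \<in> N0 then 0 else (\<lambda>(\<omega>, s, t). k \<omega> s t) x) \<in> borel_measurable (M \<Otimes>\<^sub>M (borel \<Otimes>\<^sub>M borel))"
      by measurable
    then show ?thesis
      by (rule measurable_cong[THEN iffD1, rotated]) (auto simp: kk_def space_pair_measure split: prod.splits)
  qed
  have kmom: "(\<lambda>\<omega>. k \<omega> s t) \<in> borel_measurable M" for s t
  proof -
    have "(\<lambda>\<omega>. (\<lambda>(\<omega>, s, t). k \<omega> s t) (\<omega>, s, t)) \<in> borel_measurable M" by measurable
    then show ?thesis by simp
  qed
  have kkmom: "(\<lambda>\<omega>. kk \<omega> s t) \<in> borel_measurable M" for s t
  proof -
    have "(\<lambda>\<omega>. (\<lambda>(\<omega>, s, t). kk \<omega> s t) (\<omega>, s, t)) \<in> borel_measurable M" by measurable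
    then show ?thesis by simp
  qed
  have aeN0: "AE \<omega> in M. \<omega> \<notin> N0"
    by (rule AE_I'[of N0]) (use N0 in auto)
  have Kkk: "K s t = (\<integral>\<omega>. kk \<omega> s t \<partial>M)" for s t
    unfolding assms(5)
    by (rule integral_cong_AE[OF kmom kkmom]) (use aeN0 in \<open>auto simp: kk_def\<close>)
  have kkint: "integrable M (\<lambda>\<omega>. kk \<omega> s t)" for s t
    by (rule M.integrable_const_bound[where B=1]) (use kkb kkmom in auto)
  have Kb: "\<bar>K s t\<bar> \<le> 1" for s t
  proof -
    have "\<bar>K s t\<bar> \<le> (\<integral>\<omega>. \<bar>kk \<omega> s t\<bar> \<partial>M)" unfolding Kkk by (rule integral_abs_bound)
    also have "\<dots> \<le> (\<integral>\<omega>. 1 \<partial>M)" using kkint kkb by (intro integral_mono) auto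
    finally show ?thesis by (simp add: M.prob_space)
  qed
  note S_set_borel[measurable]
  define Q where "Q = \<rho> \<Otimes>\<^sub>M M"
  have Qp: "prob_space Q" unfolding Q_def by (rule prob_space_pair[OF assms(8,1)])
  interpret Q: prob_space Q by fact
  interpret RM: pair_sigma_finite \<rho> M by unfold_locales
  have Qsets: "sets Q = sets (borel \<Otimes>\<^sub>M M)" unfolding Q_def by (rule sets_pair_measure_cong[OF assms(9) refl])
  have spQ: "space Q = UNIV \<times> space M" unfolding Q_def by (simp add: space_pair_measure sp)
  define cstar where "cstar z = (if z \<in> S_set then g z else 0)" for z
  have ccont: "continuous_on S_set cstar"
    by (rule continuous_on_eq[OF continuous_on_subset[OF g(1)]]) (auto simp: cstar_def)
  have cstb: "\<bar>cstar z\<bar> \<le> B" for z using spec[OF g(2), of z] B0 by (simp add: cstar_def)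
  have cstm[measurable]: "cstar \<in> borel_measurable borel" unfolding cstar_def by measurable
  define \<phi> where "\<phi> x q = cstar (fst q) * kk (snd q) (fst (fst q) \<bullet> x + fst (snd (fst q))) (snd (snd (fst q)))" for x q
  have \<phi>m: "\<phi> x \<in> borel_measurable Q" for x
  proof -
    define e1 where "e1 z = fst z \<bullet> x + fst (snd z)" for z :: "(real^'n) \<times> real \<times> real"
    define e2 where "e2 z = snd (snd z)" for z :: "(real^'n) \<times> real \<times> real"
    have [measurable]: "e1 \<in> borel_measurable borel" unfolding e1_def
      by (intro borel_measurable_continuous_onI continuous_intros)
    have [measurable]: "e2 \<in> borel_measurable borel" unfolding e2_def
      by (intro borel_measurable_continuous_onI continuous_intros)
    have "(\<lambda>q. (snd q, e1 (fst q), e2 (fst q))) \<in> measurable (borel \<Otimes>\<^sub>M M) (M \<Otimes>\<^sub>M (borel \<Otimes>\<^sub>M borel))"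
      by measurable
    from measurable_compose[OF this kkm]
    have "(\<lambda>q. (\<lambda>(\<omega>, s, t). kk \<omega> s t) (snd q, fst (fst q) \<bullet> x + fst (snd (fst q)), snd (snd (fst q)))) \<in> borel_measurable (borel \<Otimes>\<^sub>M M)"
      by (simp add: e1_def e2_def)
    then have "(\<lambda>q. cstar (fst q) * (\<lambda>(\<omega>, s, t). kk \<omega> s t) (snd q, fst (fst q) \<bullet> x + fst (snd (fst q)), snd (snd (fst q)))) \<in> borel_measurable (borel \<Otimes>\<^sub>M M)"
      by measurable
    then show ?thesis unfolding measurable_cong_sets[OF Qsets refl] \<phi>_def by simp
  qed
  have \<phi>b: "\<bar>\<phi> x q\<bar> \<le> B" for x q
    unfolding \<phi>_def abs_mult using mult_mono[OF cstb kkb] B0 by simp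
  have \<phi>L: "\<bar>\<phi> x q - \<phi> y q\<bar> \<le> B * L * norm (x - y)" for x y q
  proof (cases "fst q \<in> S_set")
    case True
    obtain a b t \<omega> where q: "q = ((a, b, t), \<omega>)" by (metis prod.collapse)
    have a1: "norm a \<le> 1" using True q by (simp add: S_set_def)
    have "\<bar>a \<bullet> x - a \<bullet> y\<bar> = \<bar>a \<bullet> (x - y)\<bar>" by (simp add: inner_diff_right)
    also have "\<dots> \<le> norm a * norm (x - y)" by (rule Cauchy_Schwarz_ineq2)
    also have "\<dots> \<le> norm (x - y)" using a1 by (simp add: mult_left_le_one_le)
    finally have ax: "\<bar>a \<bullet> x - a \<bullet> y\<bar> \<le> norm (x - y)" .
    have "\<bar>\<phi> x q - \<phi> y q\<bar> = \<bar>cstar (a, b, t)\<bar> * \<bar>kk \<omega> (a \<bullet> x + b) t - kk \<omega> (a \<bullet> y + b) t\<bar>"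
      unfolding \<phi>_def q by (simp flip: abs_mult right_diff_distrib)
    also have "\<dots> \<le> B * (L * \<bar>(a \<bullet> x + b) - (a \<bullet> y + b)\<bar>)"
      by (rule mult_mono[OF cstb kkL]) (use B0 in auto)
    also have "\<dots> \<le> B * (L * norm (x - y))"
      using ax L0 B0 by (intro mult_left_mono) auto
    finally show ?thesis by (simp add: mult.assoc)
  next
    case False
    then show ?thesis using B0 L0 by (simp add: \<phi>_def cstar_def)
  qed
  have \<phi>int: "integrable Q (\<phi> x)" for x
    by (rule Q.integrable_const_bound[where B=B]) (use \<phi>b \<phi>m in auto)
  define fstar where "fstar x = (\<integral>q. \<phi> x q \<partial>Q)" for x
  have fstarL: "\<bar>fstar x - fstar y\<bar> \<le> B * L * norm (x - y)" for x y
  proof -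
    have "\<bar>fstar x - fstar y\<bar> = \<bar>\<integral>q. \<phi> x q - \<phi> y q \<partial>Q\<bar>"
      unfolding fstar_def using \<phi>int by simp
    also have "\<dots> \<le> (\<integral>q. \<bar>\<phi> x q - \<phi> y q\<bar> \<partial>Q)" by (rule integral_abs_bound)
    also have "\<dots> \<le> (\<integral>q. B * L * norm (x - y) \<partial>Q)"
      using \<phi>int \<phi>L by (intro integral_mono) auto
    finally show ?thesis by (simp add: Q.prob_space)
  qed
  have fstar_f: "\<bar>fstar x - f x\<bar> \<le> e0" for x
  proof -
    define Kx where "Kx z = K (fst z \<bullet> x + fst (snd z)) (snd (snd z))" for z :: "(real^'n) \<times> real \<times> real"
    have "continuous_on UNIV (\<lambda>z. (\<lambda>(s, t). K s t) (fst z \<bullet> x + fst (snd z), snd (snd z)))"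
      by (rule continuous_on_compose2[OF assms(6)]) (auto intro!: continuous_intros)
    then have "continuous_on UNIV Kx" by (simp add: Kx_def)
    then have Kxb[measurable]: "Kx \<in> borel_measurable borel" by (rule borel_measurable_continuous_onI)
    have Kxm: "Kx \<in> borel_measurable \<rho>" unfolding measurable_cong_sets[OF assms(9) refl] by simp
    have cstm': "cstar \<in> borel_measurable \<rho>" unfolding measurable_cong_sets[OF assms(9) refl] by simp
    have Kxb1: "\<bar>Kx z\<bar> \<le> 1" for z unfolding Kx_def by (rule Kb)
    have "fstar x = (\<integral>z. (\<integral>\<omega>. \<phi> x (z, \<omega>) \<partial>M) \<partial>\<rho>)"
      unfolding fstar_def using RM.integral_fst'[OF \<phi>int[unfolded Q_def]] Q_def by simp
    also have "\<dots> = (\<integral>z. cstar z * Kx z \<partial>\<rho>)"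
      by (intro Bochner_Integration.integral_cong refl) (simp add: \<phi>_def Kx_def Kkk)
    finally have fs: "fstar x = (\<integral>z. cstar z * Kx z \<partial>\<rho>)" .
    have fx: "f x = (\<integral>z. indicator S_set z * (c z * Kx z) \<partial>\<rho>)"
      unfolding fdef set_lebesgue_integral_def Kx_def by simp
    have int1: "integrable \<rho> (\<lambda>z. indicator S_set z * (c z * Kx z))"
    proof (rule Bochner_Integration.integrable_bound[OF cint])
      show "(\<lambda>z. indicator S_set z * (c z * Kx z)) \<in> borel_measurable \<rho>"
        using cm Kxm Sb by measurable
      show "AE z in \<rho>. norm (indicator S_set z * (c z * Kx z)) \<le> norm (c z)"
      proof (intro AE_I2)
        fix z
        have "\<bar>c z * Kx z\<bar> \<le> \<bar>c z\<bar>" using Kxb1[of z] by (simp add: abs_mult mult_left_le)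
        then show "norm (indicator S_set z * (c z * Kx z)) \<le> norm (c z)"
          by (auto simp: indicator_def)
      qed
    qed
    have int2: "integrable \<rho> (\<lambda>z. cstar z * Kx z)"
    proof (rule R.integrable_const_bound[where B=B])
      show "AE z in \<rho>. norm (cstar z * Kx z) \<le> B"
        using mult_mono[OF cstb Kxb1] B0 by (intro AE_I2) (simp add: abs_mult)
    qed (use cstm' Kxm in measurable)
    have "\<bar>fstar x - f x\<bar> = \<bar>\<integral>z. indicator S_set z * (c z * Kx z) - cstar z * Kx z \<partial>\<rho>\<bar>"
      unfolding fs fx using int1 int2 by simp
    also have "\<dots> \<le> (\<integral>z. \<bar>indicator S_set z * (c z * Kx z) - cstar z * Kx z\<bar> \<partial>\<rho>)"
      by (rule integral_abs_bound)
    also have "\<dots> \<le> (\<integral>z. \<bar>c z - g z\<bar> \<partial>\<rho>)"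
    proof (rule integral_mono)
      show "integrable \<rho> (\<lambda>z. \<bar>indicator S_set z * (c z * Kx z) - cstar z * Kx z\<bar>)"
        using int1 int2 by auto
      show "integrable \<rho> (\<lambda>z. \<bar>c z - g z\<bar>)" using g(3) by auto
      fix z
      have e: "indicator S_set z * (c z * Kx z) - cstar z * Kx z = indicator S_set z * ((c z - g z) * Kx z)"
        by (simp add: cstar_def indicator_def algebra_simps)
      have "\<bar>(c z - g z) * Kx z\<bar> \<le> \<bar>c z - g z\<bar>" using Kxb1[of z] by (simp add: abs_mult mult_left_le)
      then show "\<bar>indicator S_set z * (c z * Kx z) - cstar z * Kx z\<bar> \<le> \<bar>c z - g z\<bar>"
        unfolding e by (auto simp: indicator_def)
    qed
    finally show ?thesis unfolding e0_def .
  qed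
  define r where "r = \<eta> / (8 * (B * L + 1))"
  have BL0: "0 \<le> B * L" using B0 L0 by simp
  have r0: "r > 0" unfolding r_def using assms(13) BL0 by (intro divide_pos_pos) auto
  have BLr: "B * L * r < \<eta> / 8"
  proof -
    have "B * L * r = (B * L / (B * L + 1)) * (\<eta> / 8)" unfolding r_def using BL0 by (simp add: field_simps)
    also have "\<dots> < 1 * (\<eta> / 8)" using BL0 assms(13) by (intro mult_strict_right_mono) auto
    finally show ?thesis by simp
  qed
  obtain T where T: "finite T" "T \<subseteq> X" "X \<subseteq> (\<Union>y\<in>T. ball y r)"
    using seq_compact_imp_totally_bounded[OF compact_imp_seq_compact[OF assms(11)]] r0 by meson
  define m where "m = card T"
  define \<tau> where "\<tau> = \<eta> / 8"
  have \<tau>0: "\<tau> > 0" unfolding \<tau>_def using assms(13) by simp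
  define N where "N = nat \<lceil>4 * B\<^sup>2 * (m + 1) / (\<delta> * \<tau>\<^sup>2)\<rceil> + 1"
  have N0': "N > 0" unfolding N_def by simp
  have Nbig: "4 * B\<^sup>2 * (m + 1) \<le> \<delta> * \<tau>\<^sup>2 * N"
  proof -
    have "4 * B\<^sup>2 * (m + 1) / (\<delta> * \<tau>\<^sup>2) \<le> real N" unfolding N_def by linarith
    then show ?thesis using assms(14) \<tau>0 by (simp add: field_simps)
  qed
  define P where "P = PiM {..<N} (\<lambda>_. Q)"
  interpret P: prob_space P unfolding P_def by (rule prob_space_PiM) (rule Qp)
  have compm: "(\<lambda>p. p i) \<in> measurable P Q" if "i < N" for i
    unfolding P_def using that by (intro measurable_component_singleton) auto
  define Y where "Y y p = (1 / real N) * (\<Sum>i<N. \<phi> y (p i)) - fstar y" for y p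
  define SS where "SS p = (\<Sum>y\<in>T. (Y y p)\<^sup>2)" for p
  have Yint: "integrable P (\<lambda>p. (Y y p)\<^sup>2)" and YE: "(\<integral>p. (Y y p)\<^sup>2 \<partial>P) \<le> 4 * B\<^sup>2 / N" for y
    using mc_var[OF Qp \<phi>m \<phi>b N0'] unfolding Y_def P_def fstar_def by auto
  have SSint: "integrable P SS" unfolding SS_def using Yint by auto
  have SSm[measurable]: "SS \<in> borel_measurable P" using SSint by auto
  have ESS: "(\<integral>p. SS p \<partial>P) \<le> m * (4 * B\<^sup>2 / N)"
  proof -
    have "(\<integral>p. SS p \<partial>P) = (\<Sum>y\<in>T. (\<integral>p. (Y y p)\<^sup>2 \<partial>P))"
      unfolding SS_def using Yint by (simp add: Bochner_Integration.integral_sum)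
    also have "\<dots> \<le> m * (4 * B\<^sup>2 / N)" unfolding m_def using YE by (rule sum_bounded_above)
    finally show ?thesis .
  qed
  have bad: "measure P {p\<in>space P. \<tau>\<^sup>2 \<le> SS p} \<le> \<delta>"
  proof -
    have "measure P {p\<in>space P. \<tau>\<^sup>2 \<le> SS p} \<le> (\<integral>p. SS p \<partial>P) / \<tau>\<^sup>2"
      by (rule integral_Markov_inequality_measure[OF SSint sets.top]) (use \<tau>0 in \<open>auto simp: SS_def intro!: AE_I2 sum_nonneg\<close>)
    also have "\<dots> \<le> (m * (4 * B\<^sup>2 / N)) / \<tau>\<^sup>2" using ESS \<tau>0 by (intro divide_right_mono) auto
    also have "\<dots> \<le> \<delta>"
    proof -
      have "m * (4 * B\<^sup>2) \<le> 4 * B\<^sup>2 * (m + 1)" by (simp add: algebra_simps)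
      also have "\<dots> \<le> \<delta> * \<tau>\<^sup>2 * N" by (rule Nbig)
      finally show ?thesis using N0' \<tau>0 by (simp add: field_simps)
    qed
    finally show ?thesis .
  qed
  define A0 where "A0 = {p\<in>space P. SS p < \<tau>\<^sup>2}"
  define A where "A = A0 \<inter> (\<Inter>i\<in>{..<N}. {p\<in>space P. snd (p i) \<notin> N0})"
  have A0m: "A0 \<in> sets P" unfolding A0_def by measurable
  have Gi: "{p\<in>space P. snd (p i) \<notin> N0} \<in> sets P" if "i < N" for i
  proof -
    have [measurable]: "(\<lambda>p. snd (p i)) \<in> measurable P M"
      using compm[OF that] unfolding Q_def by measurable
    show ?thesis by measurable
  qed
  have Am: "A \<in> sets P" unfolding A_def using A0m Gi N0' by (intro sets.Int sets.finite_INT) auto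
  have aeQ: "AE q in Q. snd q \<notin> N0"
  proof (rule AE_I'[of "space \<rho> \<times> N0"])
    show "space \<rho> \<times> N0 \<in> null_sets Q"
      using N0 unfolding Q_def by (simp add: M.emeasure_pair_measure_Times null_sets_def)
    show "{q \<in> space Q. \<not> snd q \<notin> N0} \<subseteq> space \<rho> \<times> N0"
      unfolding Q_def by (auto simp: space_pair_measure)
  qed
  have aeP: "AE p in P. \<forall>i\<in>{..<N}. snd (p i) \<notin> N0"
    unfolding P_def
    by (intro AE_finite_allI AE_PiM_component[where P="\<lambda>q. snd q \<notin> N0"] Qp aeQ) auto
  have measA: "measure P A \<ge> 1 - \<delta>"
  proof -
    have "measure P A = measure P A0"
      by (rule measure_eq_AE[OF _ Am A0m]) (use aeP in \<open>eventually_elim, auto simp: A_def A0_def\<close>)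
    also have "A0 = space P - {p\<in>space P. \<tau>\<^sup>2 \<le> SS p}" unfolding A0_def by auto
    also have "measure P \<dots> = 1 - measure P {p\<in>space P. \<tau>\<^sup>2 \<le> SS p}"
      by (rule P.prob_compl) measurable
    finally show ?thesis using bad by simp
  qed
  have e0b: "e0 < \<eta> / 4" unfolding e0_def by (rule g(4))
  have main: "\<forall>p \<in> A. \<exists>\<eta>' < \<eta>. \<forall>x \<in> X.
                 \<bar>(1 / real N) * (\<Sum>i<N. cstar (fst (p i)) *
                      k (snd (p i)) (fst (fst (p i)) \<bullet> x + fst (snd (fst (p i))))
                                    (snd (snd (fst (p i)))))
                  - f x\<bar> \<le> \<eta>'"
  proof
    fix p assume pA: "p \<in> A"
    then have pP: "p \<in> space P" and SSp: "SS p < \<tau>\<^sup>2" and pg: "\<forall>i<N. snd (p i) \<notin> N0"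
      by (auto simp: A_def A0_def)
    have pQ: "p i \<in> space Q" if "i < N" for i by (rule measurable_space[OF compm[OF that] pP])
    have eqk: "cstar (fst (p i)) * k (snd (p i)) (fst (fst (p i)) \<bullet> x + fst (snd (fst (p i)))) (snd (snd (fst (p i))))
       = \<phi> x (p i)" if "i < N" for i x
    proof -
      have "snd (p i) \<in> space M" using pQ[OF that] spQ by (auto simp: mem_Times_iff)
      then show ?thesis using pg that by (simp add: \<phi>_def kk_def)
    qed
    define G where "G x = (1 / real N) * (\<Sum>i<N. \<phi> x (p i))" for x
    have GL: "\<bar>G x - G y\<bar> \<le> B * L * norm (x - y)" for x y
    proof -
      have "G x - G y = (1 / real N) * (\<Sum>i<N. \<phi> x (p i) - \<phi> y (p i))"
        by (simp add: G_def sum_subtractf right_diff_distrib)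
      then have "\<bar>G x - G y\<bar> = (1 / real N) * \<bar>\<Sum>i<N. \<phi> x (p i) - \<phi> y (p i)\<bar>"
        by (simp add: abs_mult)
      also have "\<dots> \<le> (1 / real N) * (\<Sum>i<N. \<bar>\<phi> x (p i) - \<phi> y (p i)\<bar>)"
        by (intro mult_left_mono sum_abs) auto
      also have "\<dots> \<le> (1 / real N) * (\<Sum>i<N. B * L * norm (x - y))"
        by (intro mult_left_mono sum_mono \<phi>L) auto
      also have "\<dots> = B * L * norm (x - y)" using N0' by simp
      finally show ?thesis .
    qed
    have Yb: "\<bar>Y y p\<bar> < \<tau>" if "y \<in> T" for y
    proof -
      have "(Y y p)\<^sup>2 \<le> SS p" unfolding SS_def
        by (rule member_le_sum[OF that _ T(1)]) simp
      then have "\<bar>Y y p\<bar>\<^sup>2 < \<tau>\<^sup>2" using SSp by simp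
      then show ?thesis using less_imp_le[OF \<tau>0] by (rule power2_less_imp_less)
    qed
    define \<eta>' where "\<eta>' = 2 * (B * L * r) + \<tau> + e0"
    have eta: "\<eta>' < \<eta>" unfolding \<eta>'_def \<tau>_def using BLr e0b assms(13) by linarith
    have bnd: "\<bar>(1 / real N) * (\<Sum>i<N. cstar (fst (p i)) *
                      k (snd (p i)) (fst (fst (p i)) \<bullet> x + fst (snd (fst (p i))))
                                    (snd (snd (fst (p i)))))
                  - f x\<bar> \<le> \<eta>'" if xX: "x \<in> X" for x
    proof -
      obtain y where y: "y \<in> T" "x \<in> ball y r" using T(3) xX by blast
      have nxy: "norm (x - y) < r" using y(2) by (simp add: dist_norm norm_minus_commute)
      have s: "(1 / real N) * (\<Sum>i<N. cstar (fst (p i)) *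
                      k (snd (p i)) (fst (fst (p i)) \<bullet> x + fst (snd (fst (p i))))
                                    (snd (snd (fst (p i))))) = G x"
        unfolding G_def by (simp add: eqk)
      have b1: "\<bar>G x - G y\<bar> \<le> B * L * r"
        using GL[of x y] nxy BL0 by (meson less_imp_le mult_left_mono order_trans)
      have b2: "\<bar>G y - fstar y\<bar> < \<tau>" using Yb[OF y(1)] by (simp add: Y_def G_def)
      have b3: "\<bar>fstar y - fstar x\<bar> \<le> B * L * r"
        using fstarL[of y x] nxy BL0 by (metis less_imp_le mult_left_mono order_trans norm_minus_commute)
      have b4: "\<bar>fstar x - f x\<bar> \<le> e0" by (rule fstar_f)
      have "\<bar>G x - f x\<bar> \<le> \<eta>'"
        using b1 b2 b3 b4 unfolding \<eta>'_def abs_le_iff abs_less_iff by linarith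
      then show ?thesis unfolding s .
    qed
    show "\<exists>\<eta>' < \<eta>. \<forall>x \<in> X.
                 \<bar>(1 / real N) * (\<Sum>i<N. cstar (fst (p i)) *
                      k (snd (p i)) (fst (fst (p i)) \<bullet> x + fst (snd (fst (p i))))
                                    (snd (snd (fst (p i)))))
                  - f x\<bar> \<le> \<eta>'" using eta bnd by blast
  qed
  have AmP: "A \<in> sets (PiM {..<N} (\<lambda>_. \<rho> \<Otimes>\<^sub>M M))" using Am unfolding P_def Q_def .
  have measA': "measure (PiM {..<N} (\<lambda>_. \<rho> \<Otimes>\<^sub>M M)) A \<ge> 1 - \<delta>" using measA unfolding P_def Q_def .
  show ?thesis
    apply (rule exI[of _ cstar], rule exI[of _ "1::real"], rule exI[of _ N])
    apply (intro conjI ccont N0')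
     apply simp
    apply (rule bexI[OF _ AmP])
    apply (intro conjI measA')
    using main by simp
qed

end
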